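(* Let $\alpha\ge0$ and let $a<b$ be real numbers, with $a>0$ if $\alpha>0$. Let $$f_{\alpha,a}(x)=\frac1{2\pi}\sqrt{\frac{b-x}{x-a}}\Big(2x+b-a-2\alpha\sqrt{\frac ab}\frac1x\Big),\qquad x\in\,]a,b]$$ (for $\alpha=0$ the last term is absent). Then $f_{\alpha,a}(x)\,dx$ defines a probability measure on $]a,b]$ if and only if $\psi_\alpha(b,a)=0$ and $\varphi_\alpha(b,a)\ge0$, where $$\varphi_\alpha(x,a)=x+a-\frac{2\alpha}{\sqrt{ax}},\qquad \psi_\alpha(x,a)=\frac34(x-a)^2+a(x-a)+2\alpha\frac{\sqrt a}{\sqrt x}-2\alpha-2$$ (for $\alpha=0$: $\varphi_0(x,a)=x+a$, $\psi_0(x,a)=\frac34(x-a)^2+a(x-a)-2$). *)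

theory Defs
  imports "HOL-Probability.Probability"
begin

text \<open>The density f_{alpha,a} on ]a,b]. For alpha = 0 the last term vanishes
  (the factor 2*alpha is 0), matching the paper's convention.\<close>
definition f_dens :: "real \<Rightarrow> real \<Rightarrow> real \<Rightarrow> real \<Rightarrow> real" where
  "f_dens \<alpha> a b x =
     1 / (2 * pi) * sqrt ((b - x) / (x - a)) *
       (2 * x + b - a - 2 * \<alpha> * sqrt (a / b) * (1 / x))"

definition phi :: "real \<Rightarrow> real \<Rightarrow> real \<Rightarrow> real" where
  "phi \<alpha> x a = x + a - 2 * \<alpha> / sqrt (a * x)"

definition psi :: "real \<Rightarrow> real \<Rightarrow> real \<Rightarrow> real" where
  "psi \<alpha> x a = 3 / 4 * (x - a)^2 + a * (x - a) + 2 * \<alpha> * sqrt a / sqrt x - 2 * \<alpha> - 2"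

definition defines_prob_measure :: "(real \<Rightarrow> real) \<Rightarrow> real set \<Rightarrow> bool" where
  "defines_prob_measure f S \<longleftrightarrow>
     (AE x in lborel. x \<in> S \<longrightarrow> 0 \<le> f x) \<and>
     prob_space (density (restrict_space lborel S) (\<lambda>x. ennreal (f x)))"

end

theory Submission
  imports Defs
begin

lemma d_sq1: "a < x \<Longrightarrow> ((\<lambda>x. sqrt (x-a)) has_real_derivative 1/(2* sqrt (x-a))) (at x)"
  by (auto intro!: derivative_eq_intros simp: field_simps)
lemma d_sq2: "x < b \<Longrightarrow> ((\<lambda>x. sqrt (b-x)) has_real_derivative -1/(2* sqrt (b-x))) (at x)"
  by (auto intro!: derivative_eq_intros simp: field_simps)

lemma alg0: "(U::real) > 0 \<Longrightarrow> V > 0 \<Longrightarrow> - 1 / (2 * V) * U - V * (1 / (2 * U)) = -(U*U+V*V)/(2*U*V)"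
  by (simp add: field_simps)

lemma t1: "(U::real) > 0 \<Longrightarrow> V > 0 \<Longrightarrow> inverse (1 + (V/U)^2) = U*U/(U*U+V*V)"
proof -
  assume a: "U > 0" "V > 0"
  have "1 + (V/U)^2 = (U*U+V*V)/(U*U)" using a by (simp add: power_divide add_divide_distrib power2_eq_square)
  then show ?thesis by simp
qed
lemma t2: "(S::real) \<noteq> 0 \<Longrightarrow> U \<noteq> 0 \<Longrightarrow> V \<noteq> 0 \<Longrightarrow> U*U/S * ((-S/(2*U*V))/(U*U)) = -1/(2*U*V)"
  by (simp add: field_simps)
lemma t3: "(U::real) \<noteq> 0 \<Longrightarrow> V \<noteq> 0 \<Longrightarrow> x \<noteq> 0 \<Longrightarrow> L \<noteq> 0 \<Longrightarrow> b \<noteq> 0 \<Longrightarrow> inverse (x*L/(b*(U*U))) * (0 * (V / U) + (-L/(2*U*V)) / (U * U) * r) = - r * b / (2 * U * V * x)"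
  by (simp add: field_simps)

lemma alg1: assumes "(U::real) > 0" "V > 0"
  shows "inverse (1 + (V / U)\<^sup>2) * ((- 1 / (2 * V) * U - V * (1 / (2 * U))) / (U * U)) = - 1 / (2 * U * V)"
  unfolding t1[OF assms] alg0[OF assms] using assms by (intro t2) (auto simp: add_pos_pos)

lemma d_at:
  fixes a b x :: real
  assumes "a < x" "x < b"
  shows "((\<lambda>x. arctan (sqrt (b-x) / sqrt (x-a))) has_real_derivative -1/(2* sqrt(x-a)* sqrt(b-x))) (at x)"
proof -
  define U where "U = sqrt (x-a)"
  define V where "V = sqrt (b-x)"
  have U: "U > 0" "U^2 = x-a" using assms by (auto simp: U_def)
  have V: "V > 0" "V^2 = b-x" using assms by (auto simp: V_def)
  have Une: "sqrt (x-a) \<noteq> 0" "sqrt (b-x) \<noteq> 0" using assms by auto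
  have nz: "U*U + V*V \<noteq> 0" using U V by (simp add: add_pos_pos)
  show ?thesis
    apply (rule d_sq1[OF assms(1)] d_sq2[OF assms(2)] derivative_eq_intros refl | rule Une)+
    unfolding U_def[symmetric] V_def[symmetric]
    using alg1[OF U(1) V(1)] by simp
qed

lemma d_atr:
  fixes a b x :: real
  assumes "0 < a" "a < x" "x < b"
  shows "((\<lambda>x. arctan (sqrt (a/b) * (sqrt (b-x) / sqrt (x-a)))) has_real_derivative
          - sqrt (a/b) * b/(2* sqrt(x-a)* sqrt(b-x)*x)) (at x)"
proof -
  define U where "U = sqrt (x-a)"
  define V where "V = sqrt (b-x)"
  define r where "r = sqrt (a/b)"
  have U: "U > 0" "U^2 = x-a" using assms by (auto simp: U_def)
  have V: "V > 0" "V^2 = b-x" using assms by (auto simp: V_def)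
  have r: "r > 0" "r^2 = a/b" using assms by (auto simp: r_def)
  have Une: "sqrt (x-a) \<noteq> 0" "sqrt (b-x) \<noteq> 0" using assms by auto
  have UU: "U*U = x-a" "V*V = b-x" "r*r = a/b" using U V r by (simp_all add: power2_eq_square)
  have key: "U*U + r*r*(V*V) = x*(b-a)/b" unfolding UU using assms
    by (simp add: field_simps)
  have nz: "U*U + r*r*(V*V) \<noteq> 0" unfolding key using assms by auto
  show ?thesis
    apply (rule d_sq1[OF assms(2)] d_sq2[OF assms(3)] derivative_eq_intros refl | rule Une)+
    unfolding U_def[symmetric] V_def[symmetric] r_def[symmetric]
  proof -
    have "1 + (r*(V/U))^2 = (U*U + r*r*(V*V))/(U*U)" using U(1)
      by (simp add: power_divide add_divide_distrib power2_eq_square power_mult_distrib)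
    also have "\<dots> = x*(b-a)/(b*(U*U))" unfolding key by simp
    finally have e1: "1 + (r*(V/U))^2 = x*(b-a)/(b*(U*U))" .
    have e2: "U*U+V*V = b-a" using UU by simp
    show "inverse (1 + (r * (V / U))\<^sup>2) *
     (0 * (V / U) + (- 1 / (2 * V) * U - V * (1 / (2 * U))) / (U * U) * r) =
     - r * b / (2 * U * V * x)" unfolding alg0[OF U(1) V(1)] e1 e2 using U(1) V(1) assms
      by (intro t3) auto
  qed
qed

lemma d_uv:
  fixes a b x :: real
  assumes "a < x" "x < b"
  shows "((\<lambda>x. sqrt (x-a) * sqrt (b-x)) has_real_derivative (a+b-2*x)/(2* sqrt(x-a) * sqrt(b-x))) (at x)"
proof -
  define U where "U = sqrt (x-a)"
  define V where "V = sqrt (b-x)"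
  have U: "U > 0" "U*U = x-a" using assms by (auto simp: U_def)
  have V: "V > 0" "V*V = b-x" using assms by (auto simp: V_def)
  have ae: "a = x - U*U" and be: "b = x + V*V" using U V by auto
  show ?thesis
    apply (rule d_sq1[OF assms(1)] d_sq2[OF assms(2)] derivative_eq_intros refl)+
    unfolding U_def[symmetric] V_def[symmetric]
    using U(1) V(1) unfolding ae be by (simp add: field_simps)
qed

definition FA :: "real \<Rightarrow> real \<Rightarrow> real \<Rightarrow> real" where
  "FA a b x = (x + (3*a-b)/2) * (sqrt (x-a) * sqrt (b-x))
      + (3*a+b)*(a-b)/2 * arctan (sqrt (b-x) / sqrt (x-a))
      + (b-a) * (sqrt (x-a) * sqrt (b-x) - (b-a) * arctan (sqrt (b-x) / sqrt (x-a)))"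

lemma d_FA:
  fixes a b x :: real
  assumes "a < x" "x < b"
  shows "(FA a b has_real_derivative (sqrt (b-x) / sqrt (x-a) * (2*x+b-a))) (at x)"
proof -
  define U where "U = sqrt (x-a)"
  define V where "V = sqrt (b-x)"
  have U: "U > 0" "U*U = x-a" using assms by (auto simp: U_def)
  have V: "V > 0" "V*V = b-x" using assms by (auto simp: V_def)
  have ae: "a = x - U*U" and be: "b = x + V*V" using U V by auto
  show ?thesis unfolding FA_def[abs_def]
    apply (rule d_uv[OF assms] d_at[OF assms] derivative_eq_intros refl)+
    unfolding U_def[symmetric] V_def[symmetric]
    using U(1) V(1) unfolding ae be apply (simp add: field_simps)
    done
qed

definition FH :: "real \<Rightarrow> real \<Rightarrow> real \<Rightarrow> real" where
  "FH a b x = 2 * sqrt (a/b) * arctan (sqrt (b-x) / sqrt (x-a))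
      - 2 * arctan (sqrt (a/b) * (sqrt (b-x) / sqrt (x-a)))"

lemma d_FH:
  fixes a b x :: real
  assumes "0 < a" "a < x" "x < b"
  shows "(FH a b has_real_derivative (sqrt (a/b) * (sqrt (b-x) / sqrt (x-a)) / x)) (at x)"
proof -
  define U where "U = sqrt (x-a)"
  define V where "V = sqrt (b-x)"
  have U: "U > 0" "U*U = x-a" using assms by (auto simp: U_def)
  have V: "V > 0" "V*V = b-x" using assms by (auto simp: V_def)
  have ae: "a = x - U*U" and be: "b = x + V*V" using U V by auto
  define r where "r = sqrt (a/b)"
  have xpos: "x > 0" using assms by simp
  show ?thesis unfolding FH_def[abs_def]
    apply (rule d_atr[OF assms] d_at[OF assms(2,3)] derivative_eq_intros refl)+
    unfolding U_def[symmetric] V_def[symmetric]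
    unfolding r_def[symmetric]
    using U(1) V(1) xpos unfolding be apply (simp add: field_simps)
    done
qed

lemma lim_s:
  fixes a b :: real assumes "a < b"
  shows "LIM x at_right a. sqrt (b-x) / sqrt (x-a) :> at_top"
proof (rule LIM_at_top_divide)
  show "((\<lambda>x. sqrt (b-x)) \<longlongrightarrow> sqrt (b-a)) (at_right a)"
    by (intro tendsto_intros)
  show "0 < sqrt (b-a)" using assms by simp
  have "((\<lambda>x. sqrt (x-a)) \<longlongrightarrow> sqrt (a-a)) (at_right a)"
    by (intro tendsto_intros)
  then show "((\<lambda>x. sqrt (x-a)) \<longlongrightarrow> 0) (at_right a)" by simp
  show "\<forall>\<^sub>F x in at_right a. 0 < sqrt (x - a)"
    using eventually_at_right_less[of a] by eventually_elim simp
qed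

lemma lim_atan_s:
  fixes a b r :: real assumes "a < b" "r > 0"
  shows "((\<lambda>x. arctan (r * (sqrt (b-x) / sqrt (x-a)))) \<longlongrightarrow> pi/2) (at_right a)"
  by (rule filterlim_compose[OF tendsto_arctan_at_top filterlim_tendsto_pos_mult_at_top[OF tendsto_const assms(2) lim_s[OF assms(1)]]])

lemma lim_atan_s1:
  fixes a b :: real assumes "a < b"
  shows "((\<lambda>x. arctan (sqrt (b-x) / sqrt (x-a))) \<longlongrightarrow> pi/2) (at_right a)"
  using lim_atan_s[OF assms, of 1] by simp

lemma lim_uv:
  fixes a b :: real
  shows "((\<lambda>x. sqrt (x-a) * sqrt (b-x)) \<longlongrightarrow> 0) (at_right a)"
proof -
  have "((\<lambda>x. sqrt (x-a) * sqrt (b-x)) \<longlongrightarrow> sqrt (a-a) * sqrt (b-a)) (at_right a)"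
    by (intro tendsto_intros)
  then show ?thesis by simp
qed

lemma lim_FA_a:
  fixes a b :: real assumes "a < b"
  shows "(FA a b \<longlongrightarrow> (3*a+b)*(a-b)/2 * (pi/2) - (b-a)*(b-a)*(pi/2)) (at_right a)"
proof -
  have "(FA a b \<longlongrightarrow> (a + (3*a-b)/2) * 0 + (3*a+b)*(a-b)/2 * (pi/2) + (b-a) * (0 - (b-a) * (pi/2))) (at_right a)"
    unfolding FA_def[abs_def]
    by (intro tendsto_intros lim_uv lim_atan_s1[OF assms])
  moreover have "(a + (3*a-b)/2) * 0 + (3*a+b)*(a-b)/2 * (pi/2) + (b-a) * (0 - (b-a) * (pi/2))
     = (3*a+b)*(a-b)/2 * (pi/2) - (b-a)*(b-a)*(pi/2)" by (simp add: field_simps)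
  ultimately show ?thesis by metis
qed

lemma lim_FH_a:
  fixes a b :: real assumes "0 < a" "a < b"
  shows "(FH a b \<longlongrightarrow> 2 * sqrt (a/b) * (pi/2) - 2 * (pi/2)) (at_right a)"
  unfolding FH_def[abs_def]
  using assms by (intro tendsto_intros lim_atan_s lim_atan_s1) auto

lemma lim_FA_b:
  fixes a b :: real assumes "a < b"
  shows "(FA a b \<longlongrightarrow> 0) (at_left b)"
proof -
  have "isCont (FA a b) b" unfolding FA_def[abs_def] using assms
    by (intro continuous_intros) auto
  then have "(FA a b \<longlongrightarrow> FA a b b) (at_left b)"
    by (simp add: isCont_def filterlim_at_split)
  then show ?thesis by (simp add: FA_def)
qed

lemma lim_FH_b:
  fixes a b :: real assumes "a < b"
  shows "(FH a b \<longlongrightarrow> 0) (at_left b)"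
proof -
  have "isCont (FH a b) b" unfolding FH_def[abs_def] using assms
    by (intro continuous_intros) auto
  then have "(FH a b \<longlongrightarrow> FH a b b) (at_left b)"
    by (simp add: isCont_def filterlim_at_split)
  then show ?thesis by (simp add: FH_def)
qed

lemma alg_final: "(x::real) \<noteq> 0 \<Longrightarrow> ((S * (2 * x + b - a) -
       (0 * H + R * S / x * (2 * \<alpha>))) * (2 * pi) - P * 0) / (2 * pi * (2 * pi)) =
     1 / (2 * pi) * S * (2 * x + b - a - 2 * \<alpha> * R * (1 / x))"
  by (simp add: field_simps)

lemma f_dens_eq:
  assumes "a < x"
  shows "f_dens \<alpha> a b x = 1 / (2 * pi) * (sqrt (b-x) / sqrt (x-a)) *
       (2 * x + b - a - 2 * \<alpha> * sqrt (a / b) * (1 / x))"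
  unfolding f_dens_def by (simp add: real_sqrt_divide)

lemma f_dens_cont:
  assumes "\<alpha> \<ge> 0" "a < b" "\<alpha> > 0 \<Longrightarrow> a > 0" "a < x" "x < b"
  shows "isCont (f_dens \<alpha> a b) x"
proof (cases "\<alpha> = 0")
  case True
  have "f_dens \<alpha> a b = (\<lambda>x. 1 / (2 * pi) * sqrt ((b - x) / (x - a)) * (2 * x + b - a))"
    unfolding f_dens_def True by simp
  then show ?thesis using assms by (auto intro!: continuous_intros)
next
  case False
  then have "x \<noteq> 0" using assms by force
  then show ?thesis unfolding f_dens_def[abs_def] using assms by (auto intro!: continuous_intros)
qed

lemma integral_value:
  fixes \<alpha> a b :: real
  assumes "\<alpha> \<ge> 0" and "a < b" and "\<alpha> > 0 \<Longrightarrow> a > 0"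
    and nn: "\<And>x. a < x \<Longrightarrow> x < b \<Longrightarrow> 0 \<le> f_dens \<alpha> a b x"
  shows "set_integrable lborel {a<..<b} (f_dens \<alpha> a b)"
    "set_lebesgue_integral lborel {a<..<b} (f_dens \<alpha> a b) = (b-a)*(3*b+a)/8 + \<alpha> * sqrt (a/b) - \<alpha>"
proof -
  define F where "F x = (FA a b x - 2*\<alpha>*FH a b x)/(2*pi)" for x
  define LA where "LA = (3*a+b)*(a-b)/2 * (pi/2) - (b-a)*(b-a)*(pi/2)"
  define A where "A = (LA - 2*\<alpha>*(2 * sqrt (a/b) * (pi/2) - 2 * (pi/2)))/(2*pi)"
  have deriv: "DERIV F x :> f_dens \<alpha> a b x" if x: "ereal a < ereal x" "ereal x < ereal b" for x
  proof -
    from x have x': "a < x" "x < b" by auto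
    show ?thesis
    proof (cases "\<alpha> = 0")
      case True
      have Feq: "F = (\<lambda>x. FA a b x / (2*pi))" unfolding F_def[abs_def] True by simp
      have sne: "sqrt (x - a) \<noteq> 0" using x' by simp
      show ?thesis unfolding f_dens_eq[OF x'(1)] True Feq
        apply (rule DERIV_cong[OF DERIV_cdivide[OF d_FA[OF x']]])
        using sne by (simp add: field_simps)
    next
      case False
      then have a0: "a > 0" using assms by auto
      have "x \<noteq> 0" using a0 x' by auto
      show ?thesis unfolding F_def[abs_def] f_dens_eq[OF x'(1)]
        apply (rule d_FA[OF x'] d_FH[OF a0 x'] derivative_eq_intros refl)+
         apply simp
        by (rule alg_final[OF \<open>x \<noteq> 0\<close>])
    qed
  qed
  have cont: "isCont (f_dens \<alpha> a b) x" if x: "ereal a < ereal x" "ereal x < ereal b" for x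
    using x assms by (intro f_dens_cont) auto
  have nn': "AE x in lborel. ereal a < ereal x \<longrightarrow> ereal x < ereal b \<longrightarrow> 0 \<le> f_dens \<alpha> a b x"
    using nn by auto
  have limA: "(F \<longlongrightarrow> A) (at_right a)"
  proof (cases "\<alpha> = 0")
    case True
    have "F = (\<lambda>x. FA a b x / (2*pi))" unfolding F_def[abs_def] True by simp
    then show ?thesis unfolding A_def True LA_def using lim_FA_a[OF assms(2)]
      by (auto intro!: tendsto_intros)
  next
    case False
    then have a0: "a > 0" using assms by auto
    show ?thesis unfolding F_def[abs_def] A_def LA_def
      by (intro tendsto_intros lim_FA_a[OF assms(2)] lim_FH_a[OF a0 assms(2)]) auto
  qed
  have limB: "(F \<longlongrightarrow> 0) (at_left b)"
  proof -
    have "(F \<longlongrightarrow> (0 - 2*\<alpha>*0)/(2*pi)) (at_left b)"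
      unfolding F_def[abs_def]
      by (intro tendsto_intros lim_FA_b[OF assms(2)] lim_FH_b[OF assms(2)]) auto
    then show ?thesis by simp
  qed
  have ab: "ereal a < ereal b" using assms by simp
  have ftc: "set_integrable lborel (einterval (ereal a) (ereal b)) (f_dens \<alpha> a b)"
    "(LBINT x=ereal a..ereal b. f_dens \<alpha> a b x) = 0 - A"
    by (rule interval_integral_FTC_nonneg[where F=F and A=A and B=0];
        (rule ab deriv cont nn' | simp add: ereal_tendsto_simps1 limA limB)?; assumption)+
  show "set_integrable lborel {a<..<b} (f_dens \<alpha> a b)" using ftc(1) by simp
  have "set_lebesgue_integral lborel {a<..<b} (f_dens \<alpha> a b) = 0 - A"
    using ftc(2) assms(2) by (simp add: interval_lebesgue_integral_def)
  also have "\<dots> = (b-a)*(3*b+a)/8 + \<alpha> * sqrt (a/b) - \<alpha>"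
    unfolding A_def LA_def by (simp add: field_simps)
  finally show "set_lebesgue_integral lborel {a<..<b} (f_dens \<alpha> a b) = (b-a)*(3*b+a)/8 + \<alpha> * sqrt (a/b) - \<alpha>" .
qed

lemma g_at_a:
  fixes \<alpha> a b :: real
  assumes "\<alpha> \<ge> 0" and "a < b" and "\<alpha> > 0 \<Longrightarrow> a > 0"
  shows "2 * a + b - a - 2 * \<alpha> * sqrt (a / b) * (1 / a) = phi \<alpha> b a"
proof (cases "\<alpha> = 0")
  case True then show ?thesis by (simp add: phi_def)
next
  case False
  then have a0: "a > 0" and b0: "b > 0" using assms by auto
  have "sqrt (a/b) * (1/a) = 1 / sqrt (a*b)"
  proof -
    have "sqrt a * sqrt a = a" using a0 by simp
    then show ?thesis using a0 b0 by (simp add: real_sqrt_divide real_sqrt_mult field_simps)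
  qed
  then show ?thesis unfolding phi_def by (simp add: algebra_simps)
qed

lemma g_nonneg:
  fixes \<alpha> a b :: real
  assumes "\<alpha> \<ge> 0" and "a < b" and "\<alpha> > 0 \<Longrightarrow> a > 0" and "phi \<alpha> b a \<ge> 0"
    and "a < x"
  shows "0 \<le> 2 * x + b - a - 2 * \<alpha> * sqrt (a / b) * (1 / x)"
proof (cases "\<alpha> = 0")
  case True then show ?thesis using assms by (simp add: phi_def)
next
  case False
  then have a0: "a > 0" using assms by auto
  have hx: "1/x \<le> 1/a" using a0 assms(5) by (intro divide_left_mono) auto
  have "0 \<le> a/b" using a0 assms(2) by simp
  then have "sqrt (a/b) * (1/x) \<le> sqrt (a/b) * (1/a)"
    using hx by (intro mult_left_mono) auto
  then have "(2 * \<alpha>) * (sqrt (a / b) * (1 / x)) \<le> (2 * \<alpha>) * (sqrt (a / b) * (1 / a))"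
    by (rule mult_left_mono) (use assms in simp)
  then have "2 * \<alpha> * sqrt (a / b) * (1 / x) \<le> 2 * \<alpha> * sqrt (a / b) * (1 / a)"
    by (metis mult.assoc)
  then show ?thesis using g_at_a[OF assms(1-3)] assms by linarith
qed

lemma g_neg:
  fixes \<alpha> a b :: real
  assumes "\<alpha> \<ge> 0" and "a < b" and "\<alpha> > 0 \<Longrightarrow> a > 0" and "phi \<alpha> b a < 0"
  shows "\<exists>c>a. c \<le> b \<and> (\<forall>x. a < x \<longrightarrow> x < c \<longrightarrow> 2 * x + b - a - 2 * \<alpha> * sqrt (a / b) * (1 / x) < 0)"
proof -
  define g where "g x = 2 * x + b - a - 2 * \<alpha> * sqrt (a / b) * (1 / x)" for x
  have ga: "g a < 0" using g_at_a[OF assms(1-3)] assms(4) by (simp add: g_def)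
  have cont: "isCont g a"
  proof (cases "\<alpha> = 0")
    case True
    then have "g = (\<lambda>x. 2 * x + b - a)" by (simp add: g_def[abs_def])
    then show ?thesis by (auto intro!: continuous_intros)
  next
    case False
    then have "a \<noteq> 0" using assms by force
    then show ?thesis unfolding g_def[abs_def] by (auto intro!: continuous_intros)
  qed
  have "eventually (\<lambda>x. g x < 0) (at a)"
    using order_tendstoD(2)[OF cont[unfolded isCont_def] ga] .
  then obtain d where d: "d > 0" "\<And>x. x \<noteq> a \<Longrightarrow> dist x a < d \<Longrightarrow> g x < 0"
    unfolding eventually_at by auto
  show ?thesis
  proof (intro exI[of _ "min (a+d) b"] conjI allI impI)
    show "a < min (a+d) b" using d assms by simp
    show "min (a+d) b \<le> b" by simp
    fix x assume "a < x" "x < min (a+d) b"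
    then show "2 * x + b - a - 2 * \<alpha> * sqrt (a / b) * (1 / x) < 0"
      using d(2)[of x] unfolding g_def by (simp add: dist_real_def)
  qed
qed

lemma f_meas: "f_dens \<alpha> a b \<in> borel_measurable borel"
  unfolding f_dens_def[abs_def] by measurable

theorem lemma4p1:
  fixes \<alpha> a b :: real
  assumes "\<alpha> \<ge> 0" and "a < b" and "\<alpha> > 0 \<Longrightarrow> a > 0"
  shows "defines_prob_measure (f_dens \<alpha> a b) {a<..b} \<longleftrightarrow>
           psi \<alpha> b a = 0 \<and> phi \<alpha> b a \<ge> 0"
proof (cases "phi \<alpha> b a \<ge> 0")
  case False
  then have ph: "phi \<alpha> b a < 0" by simp
  obtain c where c: "c > a" "c \<le> b" "\<And>x. a < x \<Longrightarrow> x < c \<Longrightarrow> 2 * x + b - a - 2 * \<alpha> * sqrt (a / b) * (1 / x) < 0"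
    using g_neg[OF assms ph] by blast
  have fneg: "f_dens \<alpha> a b x < 0" if "a < x" "x < c" for x
  proof -
    have "1 / (2 * pi) * (sqrt (b-x) / sqrt (x-a)) > 0" using that c by simp
    from mult_pos_neg[OF this c(3)[OF that]] show ?thesis unfolding f_dens_eq[OF that(1)] .
  qed
  have "\<not> (AE x in lborel. x \<in> {a<..b} \<longrightarrow> 0 \<le> f_dens \<alpha> a b x)"
  proof
    assume "AE x in lborel. x \<in> {a<..b} \<longrightarrow> 0 \<le> f_dens \<alpha> a b x"
    then have "AE x in lborel. x \<notin> {a<..<c}"
    proof eventually_elim
      case (elim x)
      show ?case
      proof
        assume "x \<in> {a<..<c}"
        then show False using elim fneg[of x] c by auto
      qed
    qed
    then have "emeasure lborel {a<..<c} = 0"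
      by (subst (asm) AE_iff_measurable[of "{a<..<c}"]) auto
    then show False using c by simp
  qed
  then show ?thesis using False unfolding defines_prob_measure_def by auto
next
  case True
  let ?f = "f_dens \<alpha> a b"
  have fnn: "0 \<le> ?f x" if "a < x" "x \<le> b" for x
    unfolding f_dens_eq[OF that(1)] using g_nonneg[OF assms True that(1)] that
    by (intro mult_nonneg_nonneg) auto
  have ffb: "?f b = 0" by (simp add: f_dens_def)
  have iv: "set_integrable lborel {a<..<b} ?f"
    "set_lebesgue_integral lborel {a<..<b} ?f = (b-a)*(3*b+a)/8 + \<alpha> * sqrt (a/b) - \<alpha>"
    using integral_value[OF assms fnn] by (auto simp: less_imp_le)
  define T where "T = (b-a)*(3*b+a)/8 + \<alpha> * sqrt (a/b) - \<alpha>"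
  define M where "M = density (restrict_space lborel {a<..b}) (\<lambda>x. ennreal (?f x))"
  have spM: "space M = {a<..b}" by (simp add: M_def)
  have meas: "(\<lambda>x. ennreal (?f x)) \<in> borel_measurable (restrict_space lborel {a<..b})"
    using f_meas by (intro measurable_restrict_space1) measurable
  have "emeasure M (space M) = emeasure M {a<..b}" by (simp only: spM)
  also have "\<dots> = (\<integral>\<^sup>+ x. ennreal (?f x) * indicator {a<..b} x \<partial>restrict_space lborel {a<..b})"
    unfolding M_def by (rule emeasure_density[OF meas]) (simp add: sets_restrict_space_iff)
  also have "\<dots> = (\<integral>\<^sup>+ x. ennreal (?f x) * indicator {a<..b} x * indicator {a<..b} x \<partial>lborel)"
    by (subst nn_integral_restrict_space) auto
  also have "\<dots> = (\<integral>\<^sup>+ x. ennreal (indicator {a<..<b} x * ?f x) \<partial>lborel)"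
    by (rule nn_integral_cong) (auto simp: indicator_def ffb)
  also have "\<dots> = ennreal (integral\<^sup>L lborel (\<lambda>x. indicator {a<..<b} x * ?f x))"
    using iv(1) fnn
    by (intro nn_integral_eq_integral) (auto simp: set_integrable_def indicator_def)
  also have "\<dots> = ennreal T"
    using iv(2) by (simp add: set_lebesgue_integral_def T_def)
  finally have em: "emeasure M (space M) = ennreal T" .
  have pT: "psi \<alpha> b a = 2 * (T - 1)"
    unfolding psi_def T_def by (simp add: real_sqrt_divide field_simps power2_eq_square)
  have "prob_space M \<longleftrightarrow> T = 1"
  proof
    assume "prob_space M"
    then have "emeasure M (space M) = 1" by (rule prob_space.emeasure_space_1)
    then show "T = 1" using em by simp
  next
    assume "T = 1"
    then show "prob_space M" using em by (intro prob_spaceI) simp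
  qed
  moreover have "AE x in lborel. x \<in> {a<..b} \<longrightarrow> 0 \<le> ?f x"
    using fnn by auto
  ultimately show ?thesis using True pT unfolding defines_prob_measure_def M_def by auto
qed
end
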